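(* Let $0<k<n$ and $d$ be integers. Then $C_{12}>0$ for every allowable critical data set $A_c=(\alpha_c,n_1,d_1,k_1,n_2,d_2,k_2)$ for type $(n,d,k)$ with $k_1\ge n_1$.
   Context: Write $d=na-t$ with integers $a,t$, $0\le t<n$, and $ka=l(n-k)+t+m$ with integers $l,m$, $0\le m<n-k$. A critical data set for type $(n,d,k)$ is a tuple $A_c=(\alpha_c,n_1,d_1,k_1,n_2,d_2,k_2)$ with integers $n_i\ge1$, $k_i\ge0$, $d_i$ such that $n_1+n_2=n$, $d_1+d_2=d$, $k_1+k_2=k$, $\frac{d_2}{n_2}>\frac{d_1}{n_1}$, $\frac{k_1}{n_1}>\frac{k_2}{n_2}$, and $\alpha_c=\frac{d_2n_1-d_1n_2}{n_2k_1-n_1k_2}$. It is allowable if moreover $\frac tk<\alpha_c<\frac{ln+t}{k}$, $d\ge\frac1k(n^2-1)-(n-k)$, $d_1\ge\frac1{k_1}(n_1^2-1)-(n_1-k_1)$, and either ($k_2=0$ and $n_2=1$) or ($k_2\ge1$ and $d_2\ge\frac1{k_2}(n_2^2-1)-(n_2-k_2)$). Define $C_{12}=-n_1n_2-d_2n_1+d_1n_2+k_1(d_2+n_2-k_2)$. *)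

theory Defs
  imports Complex_Main
begin

definition type_params :: "int \<Rightarrow> int \<Rightarrow> int \<Rightarrow> int \<Rightarrow> int \<Rightarrow> int \<Rightarrow> int \<Rightarrow> bool" where
  "type_params n d k a t l m \<longleftrightarrow>
     d = n * a - t \<and> 0 \<le> t \<and> t < n \<and>
     k * a = l * (n - k) + t + m \<and> 0 \<le> m \<and> m < n - k"

definition critical_data_set ::
  "int \<Rightarrow> int \<Rightarrow> int \<Rightarrow> real \<Rightarrow> int \<Rightarrow> int \<Rightarrow> int \<Rightarrow> int \<Rightarrow> int \<Rightarrow> int \<Rightarrow> bool" where
  "critical_data_set n d k \<alpha> n1 d1 k1 n2 d2 k2 \<longleftrightarrow>
     n1 \<ge> 1 \<and> n2 \<ge> 1 \<and> k1 \<ge> 0 \<and> k2 \<ge> 0 \<and>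
     n1 + n2 = n \<and> d1 + d2 = d \<and> k1 + k2 = k \<and>
     real_of_int d2 / real_of_int n2 > real_of_int d1 / real_of_int n1 \<and>
     real_of_int k1 / real_of_int n1 > real_of_int k2 / real_of_int n2 \<and>
     \<alpha> = real_of_int (d2 * n1 - d1 * n2) / real_of_int (n2 * k1 - n1 * k2)"

definition allowable ::
  "int \<Rightarrow> int \<Rightarrow> int \<Rightarrow> int \<Rightarrow> int \<Rightarrow>
   real \<Rightarrow> int \<Rightarrow> int \<Rightarrow> int \<Rightarrow> int \<Rightarrow> int \<Rightarrow> int \<Rightarrow> bool" where
  "allowable n d k t l \<alpha> n1 d1 k1 n2 d2 k2 \<longleftrightarrow>
     critical_data_set n d k \<alpha> n1 d1 k1 n2 d2 k2 \<and>
     real_of_int t / real_of_int k < \<alpha> \<and>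
     \<alpha> < real_of_int (l * n + t) / real_of_int k \<and>
     real_of_int d \<ge> (real_of_int n ^ 2 - 1) / real_of_int k - real_of_int (n - k) \<and>
     real_of_int d1 \<ge> (real_of_int n1 ^ 2 - 1) / real_of_int k1 - real_of_int (n1 - k1) \<and>
     ((k2 = 0 \<and> n2 = 1) \<or>
      (k2 \<ge> 1 \<and> real_of_int d2 \<ge> (real_of_int n2 ^ 2 - 1) / real_of_int k2 - real_of_int (n2 - k2)))"

definition C12 :: "int \<Rightarrow> int \<Rightarrow> int \<Rightarrow> int \<Rightarrow> int \<Rightarrow> int \<Rightarrow> int" where
  "C12 n1 d1 k1 n2 d2 k2 = - n1 * n2 - d2 * n1 + d1 * n2 + k1 * (d2 + n2 - k2)"

end

theory Submission
  imports Defs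
begin

lemma real_bound_to_int:
  fixes n1 d1 k1 :: int
  assumes "k1 > 0"
    and "real_of_int d1 \<ge> (real_of_int n1 ^ 2 - 1) / real_of_int k1 - real_of_int (n1 - k1)"
  shows "n1^2 - 1 \<le> (d1 + n1 - k1) * k1"
proof -
  have kp: "real_of_int k1 > 0" using assms(1) by simp
  have "(real_of_int n1 ^ 2 - 1) / real_of_int k1 \<le> real_of_int (d1 + n1 - k1)"
    using assms(2) by simp
  hence "real_of_int n1 ^ 2 - 1 \<le> real_of_int (d1 + n1 - k1) * real_of_int k1"
    using kp by (simp add: pos_divide_le_eq)
  hence "real_of_int (n1^2 - 1) \<le> real_of_int ((d1 + n1 - k1) * k1)" by simp
  thus ?thesis by linarith
qed

theorem proposition5p3:
  fixes n d k a t l m n1 d1 k1 n2 d2 k2 :: int and \<alpha> :: real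
  assumes "0 < k" and "k < n"
    and "type_params n d k a t l m"
    and "allowable n d k t l \<alpha> n1 d1 k1 n2 d2 k2"
    and "k1 \<ge> n1"
  shows "C12 n1 d1 k1 n2 d2 k2 > 0"
proof -
  have tp: "d = n * a - t" "0 \<le> t" "t < n" "k * a = l * (n - k) + t + m" "0 \<le> m" "m < n - k"
    using assms(3) unfolding type_params_def by auto
  have cd: "n1 \<ge> 1" "n2 \<ge> 1" "k1 \<ge> 0" "k2 \<ge> 0" "n1 + n2 = n" "d1 + d2 = d" "k1 + k2 = k"
    "\<alpha> = real_of_int (d2 * n1 - d1 * n2) / real_of_int (n2 * k1 - n1 * k2)"
    "real_of_int k1 / real_of_int n1 > real_of_int k2 / real_of_int n2"
    using assms(4) unfolding allowable_def critical_data_set_def by auto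
  have al: "\<alpha> < real_of_int (l * n + t) / real_of_int k"
    and hd1: "real_of_int d1 \<ge> (real_of_int n1 ^ 2 - 1) / real_of_int k1 - real_of_int (n1 - k1)"
    and hd2: "(k2 = 0 \<and> n2 = 1) \<or>
      (k2 \<ge> 1 \<and> real_of_int d2 \<ge> (real_of_int n2 ^ 2 - 1) / real_of_int k2 - real_of_int (n2 - k2))"
    using assms(4) unfolding allowable_def by auto
  have k2n2: "k2 < n2" using cd assms by linarith
  have k1p: "k1 > 0" using cd assms by linarith
  have i1: "n1^2 - 1 \<le> (d1 + n1 - k1) * k1" using real_bound_to_int[OF k1p hd1] .
  have C: "C12 n1 d1 k1 n2 d2 k2 = (k1 - n1) * (d2 + n2) + d1 * n2 - k1 * k2"
    unfolding C12_def by (simp add: algebra_simps)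
  show ?thesis
  proof (cases "k1 = n1")
    case True
    have C0: "C12 n1 d1 k1 n2 d2 k2 = d1 * n2 - n1 * k2" using C True by simp
    have i1': "n1^2 - 1 \<le> d1 * n1" using i1 True by (simp add: algebra_simps)
    show ?thesis
    proof (cases "n1 \<ge> 2")
      case True
      have "d1 \<ge> n1"
      proof (rule ccontr)
        assume "\<not> d1 \<ge> n1"
        hence "d1 \<le> n1 - 1" by simp
        hence "d1 * n1 \<le> (n1 - 1) * n1" using cd by (intro mult_right_mono) auto
        thus False using i1' True by (simp add: power2_eq_square algebra_simps)
      qed
      hence "d1 * n2 \<ge> n1 * n2" using cd by (intro mult_right_mono) auto
      moreover have "n1 * n2 \<ge> n1 * (k2 + 1)" using cd k2n2 by (intro mult_left_mono) auto
      moreover have "n1 * (k2 + 1) > n1 * k2" using cd by (simp add: algebra_simps)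
      ultimately show ?thesis using C0 by linarith
    next
      case False
      hence n11: "n1 = 1" using cd by simp
      hence k11: "k1 = 1" using \<open>k1 = n1\<close> by simp
      have d1nn: "d1 \<ge> 0" using i1' n11 by simp
      show ?thesis
      proof (cases "d1 = 0")
        case False
        hence "d1 \<ge> 1" using d1nn by simp
        hence "d1 * n2 \<ge> 1 * n2" using cd by (intro mult_right_mono) auto
        thus ?thesis using C0 n11 k2n2 by simp
      next
        case True
        have nk: "n - k = n2 - k2" using cd n11 k11 by simp
        have dd: "d = d2" using cd True by simp
        have nkp: "n2 - k2 > 0" using k2n2 by simp
        have aeq: "\<alpha> = real_of_int d / real_of_int (n - k)"
          using cd(8) True n11 k11 nk dd by simp
        have key: "(l * n + t) * (n - k) \<le> d * k"
        proof -
          have "(l * n + t) * (n - k) = n * (l * (n - k)) + t * (n - k)" by (simp add: algebra_simps)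
          also have "\<dots> = n * (k * a - t - m) + t * (n - k)" using tp(4) by simp
          also have "\<dots> = d * k - n * m" unfolding tp(1) by (simp add: algebra_simps)
          moreover have "n * m \<ge> 0" using tp(5) tp(2) tp(3) by simp
          ultimately show ?thesis by simp
        qed
        have "real_of_int d / real_of_int (n - k) < real_of_int (l * n + t) / real_of_int k"
          using al aeq by simp
        hence "real_of_int d * real_of_int k < real_of_int (l * n + t) * real_of_int (n - k)"
          using assms(1,2) by (simp add: divide_less_eq less_divide_eq field_simps)
        hence "real_of_int (d * k) < real_of_int ((l * n + t) * (n - k))" by simp
        hence "d * k < (l * n + t) * (n - k)" by linarith
        thus ?thesis using key by simp
      qed
    qed
  next
    case False
    hence e1: "k1 - n1 \<ge> 1" using assms(5) by simp
    have k2p: "k2 \<ge> 1" and hd2': "real_of_int d2 \<ge> (real_of_int n2 ^ 2 - 1) / real_of_int k2 - real_of_int (n2 - k2)"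
      using hd2 cd e1 assms(2) by auto
    have i2: "n2^2 - 1 \<le> (d2 + n2 - k2) * k2" using real_bound_to_int[OF _ hd2'] k2p by simp
    have "n2^2 \<ge> (k2+1)^2" using k2n2 k2p by (intro power_mono) auto
    hence "(d2 + n2) * k2 > (2 * k2 + 1) * k2" using i2 k2p by (simp add: power2_eq_square algebra_simps)
    hence b2: "d2 + n2 \<ge> 2 * k2 + 2" using k2p
      by (smt (verit) mult_right_mono)
    have "(n1 - 2) * k1 < (n1 - 1) * k1" using k1p by (simp add: algebra_simps)
    also have "(n1 - 1) * k1 \<le> d1 * k1"
    proof -
      have "(k1 - n1)^2 \<ge> 0" by simp
      thus ?thesis using i1 k1p by (simp add: power2_eq_square algebra_simps)
    qed
    finally have "d1 > n1 - 2" using k1p by (simp add: mult_less_cancel_right)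
    hence b1: "d1 \<ge> n1 - 1" by simp
    have "(k1 - n1) * (d2 + n2) \<ge> (k1 - n1) * (2 * k2 + 2)" using b2 e1 by (intro mult_left_mono) auto
    moreover have "d1 * n2 \<ge> (n1 - 1) * n2" using b1 cd by (intro mult_right_mono) auto
    moreover have "(n1 - 1) * n2 \<ge> (n1 - 1) * (k2 + 1)" using cd k2n2 by (intro mult_left_mono) auto
    moreover have "(k1 - n1) * k2 \<ge> k2" using mult_right_mono[of 1 "k1 - n1" k2] e1 k2p by simp
    ultimately show ?thesis using C e1 cd(1) k2p by (simp add: algebra_simps)
  qed
qed

end
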